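(* Consider the two-layer multi-item order fulfillment problem described in the context, with $K\ge 1$ FDCs, fixed costs $f_0,f_1,\dots,f_K\ge 0$, and let $f=\min_{k\in[K]}f_k$. Suppose there are constants $b>a>0$ such that all variable costs satisfy $a\le c_{k,t}^i\le b$. For a threshold $\theta\ge 0$, let \textsc{Order-Size F-Priority} be the Gated Priority-based Greedy policy that uses, for every item $i$, the priority ranking $\prec_{\mathrm F}$ on $\{0,1,\dots,K\}$ defined by $k\prec_{\mathrm F}j \iff f_k<f_j$ or ($f_k=f_j$ and $k<j$), and the gating condition $G=\mathbb{I}\big(\sum_{i=1}^n S_t^i>\theta\big)$. Then \[\mathfrak{R}(\textsc{Order-Size F-Priority})\le \max\left\{\theta,\ \frac{f_0+b\theta}{f+a\theta},\ \frac{b}{a}\right\}.\] In particular, if $\theta=\sqrt{\frac{f_0}{a}+\frac{(f-b)^2}{4a^2}}-\frac{f-b}{2a}$, then \[\mathfrak{R}(\textsc{Order-Size F-Priority})\le \max\left\{\sqrt{\frac{f_0}{a}+\frac{(f-b)^2}{4a^2}}-\frac{f-b}{2a},\ \frac{b}{a}\right\}.\]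
   Context: Problem. There are $n$ items indexed by $i\in[n]=\{1,\dots,n\}$, $K$ front distribution centers (FDCs) indexed by $k\in[K]$, and one regional distribution center (RDC) indexed by $k=0$ that has unlimited inventory of every item. FDC $k$ initially holds $I_{k,0}^i\ge 0$ units of item $i$; FDC inventory is never replenished. In each period $t=1,\dots,T$ an order $\boldsymbol S_t=(S_t^i)_{i\in[n]}$ of nonnegative integers arrives. After observing $\boldsymbol S_t$ and the per-unit variable costs $c_{k,t}^i$ ($k=0,\dots,K$, $i\in[n]$), a policy must immediately and irrevocably choose quantities $m_{k,t}^i\ge 0$ with $\sum_{k=0}^K m_{k,t}^i=S_t^i$ for all $i$ and $m_{k,t}^i\le I_{k,t-1}^i$ for all $k\in[K]$, where $I_{k,t}^i=I_{k,0}^i-\sum_{\tau=1}^t m_{k,\tau}^i$. The cost of period $t$ is $\sum_{k=0}^K\big[f_k\,\mathbb{I}(\sum_{i=1}^n m_{k,t}^i>0)+\sum_{i=1}^n c_{k,t}^i m_{k,t}^i\big]$ (fixed costs $f_k$ are given); the total cost is the sum over all periods. An online policy (possibly randomized) chooses the period-$t$ quantities using only the fixed costs, initial inventories, and the orders and variable costs of periods $1,\dots,t$. An instance $I$ consists of $n,T$, the initial inventories, variable costs and orders; $\mathrm{ALG}(I)$ is the (expected) total cost of the policy and $\mathrm{OPT}(I)$ is the minimum total cost of a feasible plan chosen with full knowledge of the instance. The competitive ratio is $\mathfrak R(\mathrm{ALG})=\sup \mathrm{ALG}(I)/\mathrm{OPT}(I)$, the supremum over all $n,T$, all initial inventories,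 all variable costs $c_{k,t}^i\in[a,b]$ and all order sequences. Gated Priority-based Greedy policy: given for each item $i$ a total order $\prec_i$ on $\{0,1,\dots,K\}$ and a Boolean gating condition $G$ (a function of the fixed costs, current variable costs, current order and greedy plan), in each period $t$ it computes the greedy plan $\hat m_{k,t}^i=\min\big\{\big(S_t^i-\sum_{k'\in[K]:k'\prec_i k}I_{k',t-1}^i\big)^+,\ I_{k,t-1}^i\big\}\cdot\mathbb{I}(k\prec_i 0)$ for $k\in[K]$ and $\hat m_{0,t}^i=S_t^i-\sum_{k\in[K]}\hat m_{k,t}^i$; if $G=1$ it sets $m_{0,t}^i=S_t^i$ and $m_{k,t}^i=0$ for $k\in[K]$ (whole order to the RDC), otherwise $m_{k,t}^i=\hat m_{k,t}^i$ for all $k,i$; then it updates inventories. *)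

theory Defs
  imports "HOL-Analysis.Analysis"
begin

text \<open>Items are indexed by 1..n, periods by 1..T, FDCs by 1..K, the RDC is 0.
  An instance fixes n, T, initial FDC inventories inv0 k i, variable costs
  vcost k t i and orders order t i.  K and the fixed costs f k (k = 0..K)
  are problem data, not part of the instance.\<close>

record fulfil_inst =
  n_items :: nat
  horizon :: nat
  inv0    :: "nat \<Rightarrow> nat \<Rightarrow> nat"
  vcost   :: "nat \<Rightarrow> nat \<Rightarrow> nat \<Rightarrow> real"
  order   :: "nat \<Rightarrow> nat \<Rightarrow> nat"

definition valid_instance :: "nat \<Rightarrow> real \<Rightarrow> real \<Rightarrow> fulfil_inst \<Rightarrow> bool" where
  "valid_instance K a b I \<longleftrightarrow>
     (\<forall>k\<le>K. \<forall>t\<in>{1..horizon I}. \<forall>i\<in>{1..n_items I}.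
        a \<le> vcost I k t i \<and> vcost I k t i \<le> b)"

text \<open>A plan m k t i (quantity of item i shipped from node k in period t).\<close>
definition feasible_plan :: "nat \<Rightarrow> fulfil_inst \<Rightarrow> (nat \<Rightarrow> nat \<Rightarrow> nat \<Rightarrow> nat) \<Rightarrow> bool" where
  "feasible_plan K I m \<longleftrightarrow>
     (\<forall>t\<in>{1..horizon I}. \<forall>i\<in>{1..n_items I}. (\<Sum>k=0..K. m k t i) = order I t i) \<and>
     (\<forall>k\<in>{1..K}. \<forall>t\<in>{1..horizon I}. \<forall>i\<in>{1..n_items I}.
        int (m k t i) \<le> int (inv0 I k i) - (\<Sum>\<tau>=1..<t. int (m k \<tau> i)))"

definition plan_cost :: "nat \<Rightarrow> (nat \<Rightarrow> real) \<Rightarrow> fulfil_inst \<Rightarrow> (nat \<Rightarrow> nat \<Rightarrow> nat \<Rightarrow> nat) \<Rightarrow> real" where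
  "plan_cost K f I m =
     (\<Sum>t=1..horizon I. \<Sum>k=0..K.
        f k * (if (\<Sum>i=1..n_items I. m k t i) > 0 then 1 else 0)
        + (\<Sum>i=1..n_items I. vcost I k t i * real (m k t i)))"

definition OPT :: "nat \<Rightarrow> (nat \<Rightarrow> real) \<Rightarrow> fulfil_inst \<Rightarrow> real" where
  "OPT K f I = Inf {plan_cost K f I m | m. feasible_plan K I m}"

definition prec_F :: "(nat \<Rightarrow> real) \<Rightarrow> nat \<Rightarrow> nat \<Rightarrow> bool" where
  "prec_F f k j \<longleftrightarrow> f k < f j \<or> (f k = f j \<and> k < j)"

definition greedy_fdc :: "nat \<Rightarrow> (nat \<Rightarrow> real) \<Rightarrow> (nat \<Rightarrow> nat \<Rightarrow> nat) \<Rightarrow> (nat \<Rightarrow> nat) \<Rightarrow> nat \<Rightarrow> nat \<Rightarrow> nat" where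
  "greedy_fdc K f stock S k i =
     (if prec_F f k 0 then
        min (nat (int (S i) - (\<Sum>k'\<in>{k'\<in>{1..K}. prec_F f k' k}. int (stock k' i)))) (stock k i)
      else 0)"

definition os_decision :: "nat \<Rightarrow> (nat \<Rightarrow> real) \<Rightarrow> real \<Rightarrow> nat \<Rightarrow> (nat \<Rightarrow> nat \<Rightarrow> nat) \<Rightarrow> (nat \<Rightarrow> nat) \<Rightarrow> nat \<Rightarrow> nat \<Rightarrow> nat" where
  "os_decision K f \<theta> n stock S k i =
     (if real (\<Sum>i'=1..n. S i') > \<theta> then (if k = 0 then S i else 0)
      else if k = 0 then S i - (\<Sum>k'=1..K. greedy_fdc K f stock S k' i)
      else greedy_fdc K f stock S k i)"

primrec os_state :: "nat \<Rightarrow> (nat \<Rightarrow> real) \<Rightarrow> real \<Rightarrow> fulfil_inst \<Rightarrow> nat \<Rightarrow> nat \<Rightarrow> nat \<Rightarrow> nat" where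
  "os_state K f \<theta> I 0 = inv0 I"
| "os_state K f \<theta> I (Suc t) =
     (\<lambda>k i. if k = 0 then os_state K f \<theta> I t k i
            else os_state K f \<theta> I t k i
                 - os_decision K f \<theta> (n_items I) (os_state K f \<theta> I t) (order I (Suc t)) k i)"

definition os_plan :: "nat \<Rightarrow> (nat \<Rightarrow> real) \<Rightarrow> real \<Rightarrow> fulfil_inst \<Rightarrow> nat \<Rightarrow> nat \<Rightarrow> nat \<Rightarrow> nat" where
  "os_plan K f \<theta> I k t i =
     os_decision K f \<theta> (n_items I) (os_state K f \<theta> I (t - 1)) (order I t) k i"

definition ALG_os :: "nat \<Rightarrow> (nat \<Rightarrow> real) \<Rightarrow> real \<Rightarrow> fulfil_inst \<Rightarrow> real" where
  "ALG_os K f \<theta> I = plan_cost K f I (os_plan K f \<theta> I)"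

text \<open>Competitive ratio: supremum of ALG/OPT over admissible instances with OPT > 0
  (in the extended reals, so an unbounded ratio is \<infinity>).\<close>
definition comp_ratio_os :: "nat \<Rightarrow> (nat \<Rightarrow> real) \<Rightarrow> real \<Rightarrow> real \<Rightarrow> real \<Rightarrow> ereal" where
  "comp_ratio_os K f a b \<theta> =
     (SUP I\<in>{I. valid_instance K a b I \<and> OPT K f I > 0}. ereal (ALG_os K f \<theta> I / OPT K f I))"

end

theory Submission
  imports Defs
begin


lemma prec_irrefl: "\<not> prec_F f k k" by (auto simp: prec_F_def)
lemma prec_trans: "prec_F f k j \<Longrightarrow> prec_F f j l \<Longrightarrow> prec_F f k l"
  by (auto simp: prec_F_def)
lemma prec_total: "k \<noteq> j \<Longrightarrow> prec_F f k j \<or> prec_F f j k"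
  by (auto simp: prec_F_def)
lemma prec_le: "prec_F f k j \<Longrightarrow> f k \<le> f j" by (auto simp: prec_F_def)
lemma prec_lt: "f k < f j \<Longrightarrow> prec_F f k j" by (auto simp: prec_F_def)

lemma card_iv: "card ({A..<A+s} \<inter> {..<(S::nat)}) = min s (S - A)"
proof -
  have "{A..<A+s} \<inter> {..<S} = {A..<min (A+s) S}" by auto
  thus ?thesis by simp
qed

lemma greedy_sum:
  assumes P1: "P \<subseteq> {1..K}" and P2: "\<forall>k\<in>P. prec_F f k 0"
    and P3: "\<forall>k\<in>P. \<forall>k'\<in>{1..K}. prec_F f k' k \<longrightarrow> k' \<in> P"
  shows "(\<Sum>k\<in>P. greedy_fdc K f stock S k i) = min (S i) (\<Sum>k\<in>P. stock k i)"
proof -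
  define A where "A k = (\<Sum>k'\<in>{k'\<in>{1..K}. prec_F f k' k}. stock k' i)" for k
  define Iv where "Iv k = {A k..<A k + stock k i}" for k
  define C where "C = (\<Sum>k\<in>P. stock k i)"
  have finP: "finite P" using P1 finite_subset by blast
  have g: "greedy_fdc K f stock S k i = card (Iv k \<inter> {..<S i})" if "k \<in> P" for k
  proof -
    have "(\<Sum>k'\<in>{k'\<in>{1..K}. prec_F f k' k}. int (stock k' i)) = int (A k)"
      unfolding A_def by simp
    hence "greedy_fdc K f stock S k i = min (S i - A k) (stock k i)"
      using P2 that unfolding greedy_fdc_def by simp
    thus ?thesis unfolding Iv_def card_iv by simp
  qed
  have step: "A j + stock j i \<le> A k" if "j \<in> P" "k \<in> P" "prec_F f j k" for j k
  proof -
    have sub: "insert j {k'\<in>{1..K}. prec_F f k' j} \<subseteq> {k'\<in>{1..K}. prec_F f k' k}"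
      using that P1 prec_trans by blast
    have "A j + stock j i = (\<Sum>k'\<in>insert j {k'\<in>{1..K}. prec_F f k' j}. stock k' i)"
      unfolding A_def by (simp add: prec_irrefl)
    also have "\<dots> \<le> A k" unfolding A_def by (rule sum_mono2[OF _ sub]) auto
    finally show ?thesis .
  qed
  have disj: "Iv j \<inter> Iv k = {}" if "j \<in> P" "k \<in> P" "j \<noteq> k" for j k
  proof (cases "prec_F f j k")
    case True
    then show ?thesis using step[OF that(1,2) True] unfolding Iv_def by auto
  next
    case False
    then have "prec_F f k j" using prec_total that(3) by blast
    then show ?thesis using step[OF that(2,1)] unfolding Iv_def by auto
  qed
  have top: "A k + stock k i \<le> C" if "k \<in> P" for k
  proof -
    have sub: "insert k {k'\<in>{1..K}. prec_F f k' k} \<subseteq> P" using that P3 by blast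
    have "A k + stock k i = (\<Sum>k'\<in>insert k {k'\<in>{1..K}. prec_F f k' k}. stock k' i)"
      unfolding A_def by (simp add: prec_irrefl)
    also have "\<dots> \<le> C" unfolding C_def by (rule sum_mono2[OF finP sub]) auto
    finally show ?thesis .
  qed
  have cardU: "card (\<Union>k\<in>P. Iv k) = C"
    using card_UN_disjoint[OF finP, of Iv] disj unfolding C_def Iv_def by auto
  have cov: "(\<Union>k\<in>P. Iv k) = {..<C}"
  proof (rule card_subset_eq)
    show "(\<Union>k\<in>P. Iv k) \<subseteq> {..<C}" using top unfolding Iv_def by fastforce
  qed (auto simp: cardU)
  have "(\<Sum>k\<in>P. greedy_fdc K f stock S k i) = (\<Sum>k\<in>P. card (Iv k \<inter> {..<S i}))"
    using g by simp
  also have "\<dots> = card (\<Union>k\<in>P. Iv k \<inter> {..<S i})"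
    by (rule card_UN_disjoint[symmetric]) (use finP disj in \<open>auto simp: Iv_def[symmetric]\<close>)
  also have "(\<Union>k\<in>P. Iv k \<inter> {..<S i}) = {..<C} \<inter> {..<S i}" using cov by auto
  also have "{..<C} \<inter> {..<S i} = {..<min C (S i)}" by auto
  also have "card \<dots> = min (S i) C" by (simp add: min.commute)
  finally show ?thesis unfolding C_def .
qed



lemma greedy_le: "greedy_fdc K f stock S k i \<le> stock k i"
  by (simp add: greedy_fdc_def)
lemma greedy_zero: "\<not> prec_F f k 0 \<Longrightarrow> greedy_fdc K f stock S k i = 0"
  by (simp add: greedy_fdc_def)

lemma dec_large: "real (\<Sum>i'=1..n. S i') > \<theta> \<Longrightarrow>
   os_decision K f \<theta> n stock S k i = (if k = 0 then S i else 0)"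
  by (simp add: os_decision_def)

lemma dec_small: "\<not> real (\<Sum>i'=1..n. S i') > \<theta> \<Longrightarrow> k \<noteq> 0 \<Longrightarrow>
   os_decision K f \<theta> n stock S k i = greedy_fdc K f stock S k i"
  by (simp add: os_decision_def)

lemma greedy_total: "(\<Sum>k=1..K. greedy_fdc K f stock S k i) \<le> S i"
proof -
  let ?P = "{k\<in>{1..K}. prec_F f k 0}"
  have "(\<Sum>k=1..K. greedy_fdc K f stock S k i) = (\<Sum>k\<in>?P. greedy_fdc K f stock S k i)"
    by (rule sum.mono_neutral_right) (auto simp: greedy_zero)
  also have "\<dots> = min (S i) (\<Sum>k\<in>?P. stock k i)"
    by (rule greedy_sum) (auto intro: prec_trans)
  finally show ?thesis by simp
qed

lemma dec_sum: "(\<Sum>k=0..K. os_decision K f \<theta> n stock S k i) = S i"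
proof (cases "real (\<Sum>i'=1..n. S i') > \<theta>")
  case True
  then show ?thesis by (simp add: dec_large sum.atLeast_Suc_atMost)
next
  case False
  have "(\<Sum>k=0..K. os_decision K f \<theta> n stock S k i)
      = os_decision K f \<theta> n stock S 0 i + (\<Sum>k=1..K. os_decision K f \<theta> n stock S k i)"
    by (simp add: sum.atLeast_Suc_atMost)
  also have "(\<Sum>k=1..K. os_decision K f \<theta> n stock S k i) = (\<Sum>k=1..K. greedy_fdc K f stock S k i)"
    using False by (intro sum.cong) (auto simp: dec_small)
  finally show ?thesis using False greedy_total[of K f stock S i]
    by (simp add: os_decision_def)
qed

lemma dec_sumP:
  assumes "\<not> real (\<Sum>i'=1..n. S i') > \<theta>" "x < f 0"
  shows "(\<Sum>k\<in>{k\<in>{1..K}. f k \<le> x}. os_decision K f \<theta> n stock S k i)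
       = min (S i) (\<Sum>k\<in>{k\<in>{1..K}. f k \<le> x}. stock k i)"
proof -
  have "(\<Sum>k\<in>{k\<in>{1..K}. f k \<le> x}. os_decision K f \<theta> n stock S k i)
      = (\<Sum>k\<in>{k\<in>{1..K}. f k \<le> x}. greedy_fdc K f stock S k i)"
    using assms by (intro sum.cong) (auto simp: dec_small)
  also have "\<dots> = min (S i) (\<Sum>k\<in>{k\<in>{1..K}. f k \<le> x}. stock k i)"
    by (rule greedy_sum) (use assms in \<open>auto intro: prec_lt dest: prec_le\<close>)
  finally show ?thesis .
qed

lemma dec_le: "k \<noteq> 0 \<Longrightarrow> os_decision K f \<theta> n stock S k i \<le> stock k i"
  by (simp add: os_decision_def greedy_le)

lemma dec_nocheap: "\<not> real (\<Sum>i'=1..n. S i') > \<theta> \<Longrightarrow> k \<noteq> 0 \<Longrightarrow> f 0 \<le> f k \<Longrightarrow>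
   os_decision K f \<theta> n stock S k i = 0"
  by (simp add: os_decision_def greedy_zero prec_F_def)



lemma step_int:
  assumes "0 \<le> c" "c \<le> M"
  shows "((\<lambda>x. if x < c then 1 else 0::real) has_integral c) {0..M}"
proof -
  have "((\<lambda>x. 1::real) has_integral c) {0..c}"
    using has_integral_const_real[of "1::real" 0 c] assms by simp
  hence "((\<lambda>x. if x \<in> {0..c} then 1 else 0::real) has_integral c) {0..M}"
    using assms by (subst has_integral_restrict) auto
  thus ?thesis
    by (rule has_integral_spike_finite[of "{c}", rotated 2]) auto
qed

lemma sum_ind_card: "finite A \<Longrightarrow> (\<Sum>a\<in>A. if P a then 1 else 0::real) = real (card {a\<in>A. P a})"
  by (simp add: sum.inter_filter[symmetric])

lemma layer_cake:
  fixes p :: "'a \<Rightarrow> real" and q :: "'b \<Rightarrow> real"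
  assumes fA: "finite A" and fB: "finite B" and pA: "\<forall>a\<in>A. p a \<ge> 0" and qB: "\<forall>b\<in>B. q b \<ge> 0"
    and H: "\<forall>x\<ge>0. real (card {a\<in>A. p a > x}) \<le> \<theta> * real (card {b\<in>B. q b > x})"
  shows "(\<Sum>a\<in>A. p a) \<le> \<theta> * (\<Sum>b\<in>B. q b)"
proof -
  define M where "M = (\<Sum>a\<in>A. p a) + (\<Sum>b\<in>B. q b)"
  have sA: "0 \<le> (\<Sum>a\<in>A. p a)" using pA by (simp add: sum_nonneg)
  have sB: "0 \<le> (\<Sum>b\<in>B. q b)" using qB by (simp add: sum_nonneg)
  have pM: "p a \<le> M" if "a \<in> A" for a
    using member_le_sum[of a A p] that pA sB fA unfolding M_def by auto
  have qM: "q b \<le> M" if "b \<in> B" for b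
    using member_le_sum[of b B q] that qB sA fB unfolding M_def by auto
  have h1: "((\<lambda>x. \<Sum>a\<in>A. if x < p a then 1 else 0::real) has_integral (\<Sum>a\<in>A. p a)) {0..M}"
    by (rule has_integral_sum[OF fA]) (use pA pM step_int in auto)
  have h2: "((\<lambda>x. \<theta> * (\<Sum>b\<in>B. if x < q b then 1 else 0::real)) has_integral (\<theta> * (\<Sum>b\<in>B. q b))) {0..M}"
    by (rule has_integral_mult_right, rule has_integral_sum[OF fB]) (use qB qM step_int in auto)
  show ?thesis
  proof (rule has_integral_le[OF h1 h2])
    fix x assume "x \<in> {0..M::real}"
    then show "(\<Sum>a\<in>A. if x < p a then 1 else 0::real) \<le> \<theta> * (\<Sum>b\<in>B. if x < q b then 1 else 0::real)"
      using H fA fB by (simp add: sum_ind_card)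
  qed
qed



lemma feas_sum: "feasible_plan K I m \<Longrightarrow> t \<in> {1..horizon I} \<Longrightarrow> i \<in> {1..n_items I} \<Longrightarrow>
  (\<Sum>k=0..K. m k t i) = order I t i"
  by (simp add: feasible_plan_def)

lemma feas_inv: assumes "feasible_plan K I m" "k \<in> {1..K}" "i \<in> {1..n_items I}"
  shows "(\<Sum>\<tau>=1..horizon I. m k \<tau> i) \<le> inv0 I k i"
proof (cases "horizon I = 0")
  case True then show ?thesis by simp
next
  case False
  let ?T = "horizon I"
  have "int (m k ?T i) \<le> int (inv0 I k i) - (\<Sum>\<tau>=1..<?T. int (m k \<tau> i))"
    using assms False unfolding feasible_plan_def by auto
  hence "int ((\<Sum>\<tau>=1..<?T. m k \<tau> i) + m k ?T i) \<le> int (inv0 I k i)"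
    by (simp add: of_nat_sum)
  hence "(\<Sum>\<tau>=1..<?T. m k \<tau> i) + m k ?T i \<le> inv0 I k i" by linarith
  moreover have "{1..?T} = {1..<Suc ?T}" by auto
  ultimately show ?thesis using False by (simp add: sum.atLeastLessThan_Suc)
qed

locale inst =
  fixes K :: nat and f :: "nat \<Rightarrow> real" and \<theta> :: real and I :: fulfil_inst
  assumes fpos: "\<forall>k\<le>K. f k \<ge> 0" and th0: "\<theta> \<ge> 0"
begin

abbreviation "n \<equiv> n_items I"
abbreviation "T \<equiv> horizon I"
abbreviation "S \<equiv> order I"
abbreviation "st \<equiv> os_state K f \<theta> I"
abbreviation "M \<equiv> os_plan K f \<theta> I"
definition small :: "nat \<Rightarrow> bool" where "small t \<longleftrightarrow> \<not> real (\<Sum>i'=1..n. S t i') > \<theta>"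

lemma M_Suc: "M k (Suc t) i = os_decision K f \<theta> n (st t) (S (Suc t)) k i"
  by (simp add: os_plan_def)

lemma st_Suc: "k \<noteq> 0 \<Longrightarrow> st (Suc t) k i = st t k i - M k (Suc t) i"
  by (simp add: M_Suc)

lemma M_sum: "t \<ge> 1 \<Longrightarrow> (\<Sum>k=0..K. M k t i) = S t i"
  by (cases t) (auto simp: M_Suc dec_sum)

lemma M_large: "t \<ge> 1 \<Longrightarrow> \<not> small t \<Longrightarrow> M k t i = (if k = 0 then S t i else 0)"
  by (cases t) (auto simp: M_Suc dec_large small_def)

lemma M_nocheap: "t \<ge> 1 \<Longrightarrow> small t \<Longrightarrow> k \<noteq> 0 \<Longrightarrow> f 0 \<le> f k \<Longrightarrow> M k t i = 0"
  by (cases t) (auto simp: M_Suc dec_nocheap small_def)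

context
  fixes m x i
  assumes feas: "feasible_plan K I m" and x0: "x < f 0" and iin: "i \<in> {1..n}"
begin

definition "P = {k\<in>{1..K}. f k \<le> x}"
definition "u t = (\<Sum>k\<in>P. M k t i)"
definition "v t = (\<Sum>k\<in>P. m k t i)"
definition "R t = (\<Sum>k\<in>P. st t k i)"
definition "C = (\<Sum>k\<in>P. inv0 I k i)"

lemma inv_step:
  "t \<le> T \<Longrightarrow> (\<Sum>\<tau>=1..t. if small \<tau> then u \<tau> else 0) + R t = C \<and>
     min C (\<Sum>\<tau>=1..t. if small \<tau> then v \<tau> else 0) \<le> (\<Sum>\<tau>=1..t. if small \<tau> then u \<tau> else 0)"
proof (induction t)
  case 0
  then show ?case by (simp add: R_def C_def)
next
  case (Suc t)
  have P0: "0 \<notin> P" by (simp add: P_def)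
  have Rs: "R (Suc t) = R t - u (Suc t)"
  proof -
    have "R (Suc t) = (\<Sum>k\<in>P. st t k i - M k (Suc t) i)"
      unfolding R_def using P0 by (intro sum.cong) (auto simp: M_Suc)
    also have "\<dots> = R t - u (Suc t)" unfolding R_def u_def
      by (rule sum_subtractf_nat) (auto simp: M_Suc P_def intro!: dec_le)
    finally show ?thesis .
  qed
  have uR: "u (Suc t) \<le> R t" unfolding R_def u_def
    by (rule sum_mono) (auto simp: M_Suc P_def intro!: dec_le)
  have IH: "(\<Sum>\<tau>=1..t. if small \<tau> then u \<tau> else 0) + R t = C"
     "min C (\<Sum>\<tau>=1..t. if small \<tau> then v \<tau> else 0) \<le> (\<Sum>\<tau>=1..t. if small \<tau> then u \<tau> else 0)"
    using Suc by auto
  show ?case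
  proof (cases "small (Suc t)")
    case True
    have uu: "u (Suc t) = min (S (Suc t) i) (R t)"
      unfolding u_def R_def M_Suc P_def
      by (rule dec_sumP) (use True x0 in \<open>auto simp: small_def\<close>)
    have "v (Suc t) \<le> (\<Sum>k=0..K. m k (Suc t) i)" unfolding v_def P_def
      by (rule sum_mono2) auto
    also have "\<dots> = S (Suc t) i" using feas_sum[OF feas, of "Suc t" i] Suc.prems iin by auto
    finally have vS: "v (Suc t) \<le> S (Suc t) i" .
    show ?thesis using IH Rs uR uu vS True by auto
  next
    case False
    have "u (Suc t) = 0" unfolding u_def using P0 by (intro sum.neutral) (auto simp: M_large False)
    then show ?thesis using IH Rs False by auto
  qed
qed

lemma count_item:
  "(\<Sum>\<tau>\<in>{t\<in>{1..T}. small t}. v \<tau>) \<le> (\<Sum>\<tau>\<in>{t\<in>{1..T}. small t}. u \<tau>)"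
proof -
  have "(\<Sum>\<tau>=1..T. v \<tau>) = (\<Sum>k\<in>P. \<Sum>\<tau>=1..T. m k \<tau> i)" unfolding v_def by (rule sum.swap)
  also have "\<dots> \<le> C" unfolding C_def
    by (rule sum_mono) (use feas_inv[OF feas _ iin] in \<open>auto simp: P_def\<close>)
  finally have vC: "(\<Sum>\<tau>=1..T. v \<tau>) \<le> C" .
  have "(\<Sum>\<tau>\<in>{t\<in>{1..T}. small t}. v \<tau>) \<le> (\<Sum>\<tau>=1..T. v \<tau>)" by (rule sum_mono2) auto
  hence "(\<Sum>\<tau>\<in>{t\<in>{1..T}. small t}. v \<tau>) \<le> C" using vC by linarith
  moreover have "min C (\<Sum>\<tau>=1..T. if small \<tau> then v \<tau> else 0) \<le> (\<Sum>\<tau>=1..T. if small \<tau> then u \<tau> else 0)"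
    using inv_step[of T] by auto
  moreover have "(\<Sum>\<tau>=1..T. if small \<tau> then v \<tau> else 0) = (\<Sum>\<tau>\<in>{t\<in>{1..T}. small t}. v \<tau>)"
    by (rule sum.inter_filter[symmetric]) simp
  moreover have "(\<Sum>\<tau>=1..T. if small \<tau> then u \<tau> else 0) = (\<Sum>\<tau>\<in>{t\<in>{1..T}. small t}. u \<tau>)"
    by (rule sum.inter_filter[symmetric]) simp
  ultimately show ?thesis by linarith
qed

lemma count_item':
  "(\<Sum>\<tau>\<in>{t\<in>{1..T}. small t}. \<Sum>k\<in>{k\<in>{1..K}. f k \<le> x}. m k \<tau> i)
   \<le> (\<Sum>\<tau>\<in>{t\<in>{1..T}. small t}. \<Sum>k\<in>{k\<in>{1..K}. f k \<le> x}. M k \<tau> i)"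
  using count_item unfolding u_def v_def P_def .

end

end



context inst begin

definition fixc :: "(nat \<Rightarrow> nat \<Rightarrow> nat \<Rightarrow> nat) \<Rightarrow> nat \<Rightarrow> real" where
  "fixc g t = (\<Sum>k=0..K. f k * (if (\<Sum>i=1..n. g k t i) > 0 then 1 else 0))"

lemma fixc_nonneg: "fixc g t \<ge> 0"
  unfolding fixc_def using fpos by (intro sum_nonneg) auto

lemma fixc_ge: "j \<in> {0..K} \<Longrightarrow> (\<Sum>i=1..n. g j t i) > 0 \<Longrightarrow> f j \<le> fixc g t"
  unfolding fixc_def
  using member_le_sum[of j "{0..K}" "\<lambda>k. f k * (if (\<Sum>i=1..n. g k t i) > 0 then 1 else 0)"] fpos
  by auto

lemma swap3: "(\<Sum>t\<in>A. \<Sum>j\<in>B. \<Sum>i\<in>N. g j t i) = (\<Sum>i\<in>N. \<Sum>t\<in>A. \<Sum>j\<in>B. (g j t i::nat))"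
proof -
  have "(\<Sum>t\<in>A. \<Sum>j\<in>B. \<Sum>i\<in>N. g j t i) = (\<Sum>t\<in>A. \<Sum>i\<in>N. \<Sum>j\<in>B. g j t i)"
    by (intro sum.cong refl) (rule sum.swap)
  also have "\<dots> = (\<Sum>i\<in>N. \<Sum>t\<in>A. \<Sum>j\<in>B. g j t i)" by (rule sum.swap)
  finally show ?thesis .
qed

lemma thresh:
  assumes feas: "feasible_plan K I m" and x0: "x \<ge> 0"
  shows "real (\<Sum>t\<in>{t\<in>{1..T}. small t}. card {j\<in>{0..K}. x < f j \<and> 0 < (\<Sum>i=1..n. M j t i)})
         \<le> \<theta> * real (card {t\<in>{t\<in>{1..T}. small t}. x < fixc m t})"
proof -
  define Sm where "Sm = {t\<in>{1..T}. small t}"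
  define J where "J = {j\<in>{0..K}. x < f j}"
  have finSm: "finite Sm" unfolding Sm_def by auto
  have st1: "card {j\<in>{0..K}. x < f j \<and> 0 < (\<Sum>i=1..n. M j t i)} \<le> (\<Sum>j\<in>J. \<Sum>i=1..n. M j t i)" for t
  proof -
    let ?X = "{j\<in>{0..K}. x < f j \<and> 0 < (\<Sum>i=1..n. M j t i)}"
    have "card ?X = (\<Sum>j\<in>?X. 1)" by simp
    also have "\<dots> \<le> (\<Sum>j\<in>?X. \<Sum>i=1..n. M j t i)" by (rule sum_mono) auto
    also have "\<dots> \<le> (\<Sum>j\<in>J. \<Sum>i=1..n. M j t i)" unfolding J_def by (rule sum_mono2) auto
    finally show ?thesis .
  qed
  have st2: "(\<Sum>t\<in>Sm. \<Sum>j\<in>J. \<Sum>i=1..n. M j t i) \<le> (\<Sum>t\<in>Sm. \<Sum>j\<in>J. \<Sum>i=1..n. m j t i)"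
  proof -
    have "(\<Sum>t\<in>Sm. \<Sum>j\<in>J. M j t i) \<le> (\<Sum>t\<in>Sm. \<Sum>j\<in>J. m j t i)" if iin: "i \<in> {1..n}" for i
    proof (cases "x < f 0")
      case False
      have "(\<Sum>t\<in>Sm. \<Sum>j\<in>J. M j t i) = 0"
        using False by (auto simp: Sm_def J_def intro!: sum.neutral M_nocheap) (metis gr0I)
      then show ?thesis by simp
    next
      case True
      define P where "P = {k\<in>{1..K}. f k \<le> x}"
      have split: "{0..K} = J \<union> P" "J \<inter> P = {}" using True by (auto simp: J_def P_def not_less_eq_eq)
      have sM: "(\<Sum>j\<in>J. M j t i) + (\<Sum>j\<in>P. M j t i) = S t i" if "t \<in> Sm" for t
      proof -
        have "(\<Sum>j\<in>J. M j t i) + (\<Sum>j\<in>P. M j t i) = (\<Sum>j=0..K. M j t i)"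
          by (subst split(1), rule sum.union_disjoint[symmetric]) (use split in \<open>auto simp: J_def P_def\<close>)
        also have "\<dots> = S t i" using that by (intro M_sum) (auto simp: Sm_def)
        finally show ?thesis .
      qed
      have sm: "(\<Sum>j\<in>J. m j t i) + (\<Sum>j\<in>P. m j t i) = S t i" if "t \<in> Sm" for t
      proof -
        have "(\<Sum>j\<in>J. m j t i) + (\<Sum>j\<in>P. m j t i) = (\<Sum>j=0..K. m j t i)"
          by (subst split(1), rule sum.union_disjoint[symmetric]) (use split in \<open>auto simp: J_def P_def\<close>)
        also have "\<dots> = S t i" using that iin by (intro feas_sum[OF feas]) (auto simp: Sm_def)
        finally show ?thesis .
      qed
      have A1: "(\<Sum>t\<in>Sm. \<Sum>j\<in>J. M j t i) + (\<Sum>t\<in>Sm. \<Sum>j\<in>P. M j t i) = (\<Sum>t\<in>Sm. S t i)"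
        using sM by (simp add: sum.distrib[symmetric])
      have A2: "(\<Sum>t\<in>Sm. \<Sum>j\<in>J. m j t i) + (\<Sum>t\<in>Sm. \<Sum>j\<in>P. m j t i) = (\<Sum>t\<in>Sm. S t i)"
        using sm by (simp add: sum.distrib[symmetric])
      have "(\<Sum>t\<in>Sm. \<Sum>j\<in>P. m j t i) \<le> (\<Sum>t\<in>Sm. \<Sum>j\<in>P. M j t i)"
        unfolding Sm_def P_def by (rule count_item'[OF feas True iin])
      then show ?thesis using A1 A2 by linarith
    qed
    hence "(\<Sum>i=1..n. \<Sum>t\<in>Sm. \<Sum>j\<in>J. M j t i) \<le> (\<Sum>i=1..n. \<Sum>t\<in>Sm. \<Sum>j\<in>J. m j t i)"
      by (rule sum_mono)
    moreover note swap3[where A=Sm and B=J and N="{1..n}" and g=M] swap3[where A=Sm and B=J and N="{1..n}" and g=m]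
    ultimately show ?thesis by linarith
  qed
  have st3: "real (\<Sum>j\<in>J. \<Sum>i=1..n. m j t i) \<le> \<theta> * (if x < fixc m t then 1 else 0)" if "t \<in> Sm" for t
  proof -
    have "(\<Sum>j\<in>J. \<Sum>i=1..n. m j t i) \<le> (\<Sum>j=0..K. \<Sum>i=1..n. m j t i)"
      unfolding J_def by (rule sum_mono2) auto
    also have "\<dots> = (\<Sum>i=1..n. \<Sum>j=0..K. m j t i)" by (rule sum.swap)
    also have "\<dots> = (\<Sum>i=1..n. S t i)"
      using that by (intro sum.cong refl feas_sum[OF feas]) (auto simp: Sm_def)
    finally have z1: "real (\<Sum>j\<in>J. \<Sum>i=1..n. m j t i) \<le> \<theta>"
      using that unfolding Sm_def small_def by (auto simp del: of_nat_sum)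
    show ?thesis
    proof (cases "(\<Sum>j\<in>J. \<Sum>i=1..n. m j t i) = 0")
      case True then show ?thesis using th0 by simp
    next
      case False
      then obtain j where j: "j \<in> J" "(\<Sum>i=1..n. m j t i) \<noteq> 0" by (meson sum.neutral)
      have jK: "j \<in> {0..K}" using j unfolding J_def by auto
      have pos: "0 < (\<Sum>i=1..n. m j t i)" using j(2) by (metis gr0I)
      have "f j \<le> fixc m t" by (rule fixc_ge[where g=m, OF jK pos])
      moreover have "x < f j" using j unfolding J_def by auto
      ultimately have "x < fixc m t" by linarith
      then show ?thesis using z1 by simp
    qed
  qed
  have "real (\<Sum>t\<in>Sm. card {j\<in>{0..K}. x < f j \<and> 0 < (\<Sum>i=1..n. M j t i)})
      \<le> real (\<Sum>t\<in>Sm. \<Sum>j\<in>J. \<Sum>i=1..n. M j t i)"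
    using st1 by (simp only: of_nat_le_iff) (rule sum_mono)
  also have "\<dots> \<le> real (\<Sum>t\<in>Sm. \<Sum>j\<in>J. \<Sum>i=1..n. m j t i)" using st2 by (simp only: of_nat_le_iff)
  also have "\<dots> = (\<Sum>t\<in>Sm. real (\<Sum>j\<in>J. \<Sum>i=1..n. m j t i))" by (rule of_nat_sum)
  also have "\<dots> \<le> (\<Sum>t\<in>Sm. \<theta> * (if x < fixc m t then 1 else 0))" by (rule sum_mono) (rule st3)
  also have "\<dots> = \<theta> * real (card {t\<in>Sm. x < fixc m t})"
    by (simp add: sum_distrib_left[symmetric] sum_ind_card finSm)
  finally show ?thesis unfolding Sm_def .
qed

end



lemma large_ineq:
  fixes a b \<theta> g s f0 fj :: real
  assumes a0: "0 < a" and ab: "a < b" and th0: "0 \<le> \<theta>" and D0: "0 < g + a * \<theta>"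
    and s: "\<theta> < s" and f0: "0 \<le> f0" and fj: "0 \<le> fj" and alt: "f0 \<le> fj \<or> g \<le> fj"
  shows "f0 + b * s \<le> max \<theta> (max ((f0 + b * \<theta>) / (g + a * \<theta>)) (b / a)) * (fj + a * s)"
proof -
  define R where "R = max \<theta> (max ((f0 + b * \<theta>) / (g + a * \<theta>)) (b / a))"
  have Rba: "b / a \<le> R" unfolding R_def by simp
  have RQ: "(f0 + b * \<theta>) / (g + a * \<theta>) \<le> R" unfolding R_def by simp
  have ba1: "1 \<le> b / a" using a0 ab by simp
  have R0: "0 \<le> R" using Rba ba1 by linarith
  have s0: "0 \<le> s" using s th0 by linarith
  have bs: "b * s = (b / a) * (a * s)" using a0 by simp
  have "f0 + b * s \<le> R * (fj + a * s)"
  proof (cases "f0 \<le> fj")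
    case True
    have "f0 \<le> (b / a) * fj" using True ba1 fj by (metis dual_order.trans mult_1 mult_right_mono mult.commute)
    hence "f0 + b * s \<le> (b / a) * (fj + a * s)" using bs by (simp add: distrib_left)
    also have "\<dots> \<le> R * (fj + a * s)" by (rule mult_right_mono[OF Rba]) (use fj a0 s0 in simp)
    finally show ?thesis .
  next
    case False
    then have gfj: "g \<le> fj" using alt by auto
    have e1: "f0 + b * \<theta> = ((f0 + b * \<theta>) / (g + a * \<theta>)) * (g + a * \<theta>)" using D0 by simp
    have "f0 + b * s = (f0 + b * \<theta>) + (b / a) * (a * (s - \<theta>))" using a0 by (simp add: algebra_simps)
    also have "\<dots> \<le> R * (g + a * \<theta>) + R * (a * (s - \<theta>))"
    proof (rule add_mono)
      show "f0 + b * \<theta> \<le> R * (g + a * \<theta>)" using e1 mult_right_mono[OF RQ, of "g + a * \<theta>"] D0 by linarith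
      show "b / a * (a * (s - \<theta>)) \<le> R * (a * (s - \<theta>))"
        by (rule mult_right_mono[OF Rba]) (use a0 s in simp)
    qed
    also have "\<dots> = R * (g + a * s)" by (simp add: algebra_simps)
    also have "\<dots> \<le> R * (fj + a * s)" using gfj R0 by (simp add: mult_left_mono)
    finally show ?thesis .
  qed
  thus ?thesis unfolding R_def .
qed

locale inst2 = inst K f \<theta> I for K f \<theta> I +
  fixes a b :: real
  assumes K1: "K \<ge> 1" and a0: "0 < a" and ab: "a < b"
    and D0: "0 < Min (f ` {1..K}) + a * \<theta>" and valid: "valid_instance K a b I"
begin

definition "Rr = max \<theta> (max ((f 0 + b * \<theta>) / (Min (f ` {1..K}) + a * \<theta>)) (b / a))"

definition varc :: "(nat \<Rightarrow> nat \<Rightarrow> nat \<Rightarrow> nat) \<Rightarrow> nat \<Rightarrow> real" where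
  "varc g t = (\<Sum>k=0..K. \<Sum>i=1..n. vcost I k t i * real (g k t i))"

lemma plan_cost_split: "plan_cost K f I g = (\<Sum>t=1..T. fixc g t + varc g t)"
  unfolding plan_cost_def fixc_def varc_def by (simp add: sum.distrib)

lemma var_bounds:
  assumes t: "t \<in> {1..T}" and g: "\<forall>i\<in>{1..n}. (\<Sum>k=0..K. g k t i) = S t i"
  shows "a * real (\<Sum>i=1..n. S t i) \<le> varc g t \<and> varc g t \<le> b * real (\<Sum>i=1..n. S t i)"
proof -
  have cab: "a \<le> vcost I k t i \<and> vcost I k t i \<le> b" if "k \<in> {0..K}" "i \<in> {1..n}" for k i
    using valid t that unfolding valid_instance_def by auto
  have eq: "(\<Sum>k=0..K. \<Sum>i=1..n. c * real (g k t i)) = c * real (\<Sum>i=1..n. S t i)" for c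
  proof -
    have "(\<Sum>k=0..K. \<Sum>i=1..n. c * real (g k t i)) = c * (\<Sum>i=1..n. \<Sum>k=0..K. real (g k t i))"
      by (simp add: sum_distrib_left sum.swap[of _ "{0..K}"])
    also have "\<dots> = c * real (\<Sum>i=1..n. S t i)"
      using g by (simp add: of_nat_sum[symmetric] del: of_nat_sum)
    finally show ?thesis .
  qed
  have "(\<Sum>k=0..K. \<Sum>i=1..n. a * real (g k t i)) \<le> varc g t" unfolding varc_def
    by (intro sum_mono mult_right_mono) (use cab in auto)
  moreover have "varc g t \<le> (\<Sum>k=0..K. \<Sum>i=1..n. b * real (g k t i))" unfolding varc_def
    by (intro sum_mono mult_right_mono) (use cab in auto)
  ultimately show ?thesis using eq by simp
qed

lemma varM: "t \<in> {1..T} \<Longrightarrow> varc M t \<le> b * real (\<Sum>i=1..n. S t i)"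
  using var_bounds[of t M] M_sum by auto

lemma varm: "feasible_plan K I m \<Longrightarrow> t \<in> {1..T} \<Longrightarrow> a * real (\<Sum>i=1..n. S t i) \<le> varc m t"
  using var_bounds[of t m] feas_sum[of K I m t] by auto

end



context inst2 begin

lemma fix_bound:
  assumes feas: "feasible_plan K I m"
  shows "(\<Sum>t\<in>{t\<in>{1..T}. small t}. fixc M t) \<le> \<theta> * (\<Sum>t\<in>{t\<in>{1..T}. small t}. fixc m t)"
proof -
  define Sm where "Sm = {t\<in>{1..T}. small t}"
  define U where "U t = {j\<in>{0..K}. 0 < (\<Sum>i=1..n. M j t i)}" for t
  have finSm: "finite Sm" unfolding Sm_def by auto
  have fe: "fixc M t = (\<Sum>j\<in>U t. f j)" for t
  proof -
    have "fixc M t = (\<Sum>k=0..K. if 0 < (\<Sum>i=1..n. M k t i) then f k else 0)"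
      unfolding fixc_def by (intro sum.cong) auto
    also have "\<dots> = (\<Sum>j\<in>U t. f j)" unfolding U_def by (rule sum.inter_filter[symmetric]) simp
    finally show ?thesis .
  qed
  have "(\<Sum>t\<in>Sm. fixc M t) = (\<Sum>t\<in>Sm. \<Sum>j\<in>U t. f j)" by (simp add: fe)
  also have "\<dots> = (\<Sum>(t,j)\<in>Sigma Sm U. f j)"
    by (rule sum.Sigma) (use finSm in \<open>auto simp: U_def\<close>)
  also have "\<dots> \<le> \<theta> * (\<Sum>t\<in>Sm. fixc m t)"
  proof (rule layer_cake)
    show "finite (Sigma Sm U)" using finSm by (auto simp: U_def)
    show "finite Sm" by (rule finSm)
    show "\<forall>a\<in>Sigma Sm U. 0 \<le> (case a of (t, j) \<Rightarrow> f j)" using fpos by (auto simp: U_def)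
    show "\<forall>b\<in>Sm. 0 \<le> fixc m b" using fixc_nonneg by auto
    show "\<forall>x\<ge>0. real (card {a \<in> Sigma Sm U. x < (case a of (t, j) \<Rightarrow> f j)}) \<le> \<theta> * real (card {b \<in> Sm. x < fixc m b})"
    proof (intro allI impI)
      fix x :: real assume x0: "0 \<le> x"
      have "{a \<in> Sigma Sm U. x < (case a of (t, j) \<Rightarrow> f j)}
          = Sigma Sm (\<lambda>t. {j\<in>{0..K}. x < f j \<and> 0 < (\<Sum>i=1..n. M j t i)})"
        by (auto simp: U_def)
      hence "card {a \<in> Sigma Sm U. x < (case a of (t, j) \<Rightarrow> f j)}
          = (\<Sum>t\<in>Sm. card {j\<in>{0..K}. x < f j \<and> 0 < (\<Sum>i=1..n. M j t i)})"
        using finSm by simp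
      thus "real (card {a \<in> Sigma Sm U. x < (case a of (t, j) \<Rightarrow> f j)}) \<le> \<theta> * real (card {b \<in> Sm. x < fixc m b})"
        using thresh[OF feas x0] unfolding Sm_def by simp
    qed
  qed
  finally show ?thesis unfolding Sm_def .
qed

end



context inst2 begin

lemma Rr_ge: "b / a \<le> Rr" "\<theta> \<le> Rr" "0 \<le> Rr"
proof -
  show "b / a \<le> Rr" "\<theta> \<le> Rr" unfolding Rr_def by auto
  moreover have "0 \<le> b / a" using a0 ab by simp
  ultimately show "0 \<le> Rr" by linarith
qed

lemma large_period:
  assumes feas: "feasible_plan K I m" and t: "t \<in> {1..T}" and lg: "\<not> small t"
  shows "fixc M t + varc M t \<le> Rr * (fixc m t + varc m t)"
proof -
  define s where "s = real (\<Sum>i=1..n. S t i)"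
  have s: "\<theta> < s" using lg unfolding small_def s_def by simp
  have f0: "0 \<le> f 0" using fpos by auto
  have fixM: "fixc M t \<le> f 0"
  proof -
    have "fixc M t = f 0 * (if (\<Sum>i=1..n. M 0 t i) > 0 then 1 else 0)
        + (\<Sum>k=1..K. f k * (if (\<Sum>i=1..n. M k t i) > 0 then 1 else 0))"
      unfolding fixc_def by (simp add: sum.atLeast_Suc_atMost)
    also have "(\<Sum>k=1..K. f k * (if (\<Sum>i=1..n. M k t i) > 0 then 1 else 0)) = 0"
      using t lg by (intro sum.neutral) (auto simp: M_large)
    finally show ?thesis using f0 by simp
  qed
  have "(\<Sum>j=0..K. \<Sum>i=1..n. m j t i) = (\<Sum>i=1..n. \<Sum>j=0..K. m j t i)" by (rule sum.swap)
  also have "\<dots> = (\<Sum>i=1..n. S t i)" using t by (intro sum.cong refl feas_sum[OF feas]) auto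
  finally have sw: "(\<Sum>j=0..K. \<Sum>i=1..n. m j t i) = (\<Sum>i=1..n. S t i)" .
  have "(\<Sum>i=1..n. S t i) \<noteq> 0"
  proof
    assume h: "(\<Sum>i=1..n. S t i) = 0"
    hence "s = 0" unfolding s_def by (simp only: h of_nat_0)
    thus False using s th0 by simp
  qed
  note nz = this
  have "\<exists>j\<in>{0..K}. (\<Sum>i=1..n. m j t i) \<noteq> 0"
  proof (rule ccontr)
    assume "\<not> (\<exists>j\<in>{0..K}. (\<Sum>i=1..n. m j t i) \<noteq> 0)"
    hence "(\<Sum>j=0..K. \<Sum>i=1..n. m j t i) = 0" by (intro sum.neutral) blast
    thus False using sw nz by linarith
  qed
  then obtain j where j: "j \<in> {0..K}" "(\<Sum>i=1..n. m j t i) \<noteq> 0" by blast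
  have pos: "0 < (\<Sum>i=1..n. m j t i)" using j(2) by (metis gr0I)
  have fj: "f j \<le> fixc m t" by (rule fixc_ge[where g=m, OF j(1) pos])
  have fj0: "0 \<le> f j" using fpos j by auto
  have alt: "f 0 \<le> f j \<or> Min (f ` {1..K}) \<le> f j"
  proof (cases "j = 0")
    case False then have "j \<in> {1..K}" using j by auto
    then show ?thesis by (intro disjI2 Min_le) auto
  qed auto
  have key: "f 0 + b * s \<le> Rr * (f j + a * s)"
    unfolding Rr_def by (rule large_ineq[OF a0 ab th0 D0 s f0 fj0 alt])
  have vM: "varc M t \<le> b * s" using varM[OF t] unfolding s_def .
  have vm: "a * s \<le> varc m t" using varm[OF feas t] unfolding s_def .
  have "fixc M t + varc M t \<le> f 0 + b * s" using fixM vM by linarith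
  also have "\<dots> \<le> Rr * (f j + a * s)" by (rule key)
  also have "\<dots> \<le> Rr * (fixc m t + varc m t)" using Rr_ge(3) fj vm by (intro mult_left_mono) auto
  finally show ?thesis .
qed

lemma small_sum:
  assumes feas: "feasible_plan K I m"
  shows "(\<Sum>t\<in>{t\<in>{1..T}. small t}. fixc M t + varc M t)
       \<le> Rr * (\<Sum>t\<in>{t\<in>{1..T}. small t}. fixc m t + varc m t)"
proof -
  define Sm where "Sm = {t\<in>{1..T}. small t}"
  have f1: "(\<Sum>t\<in>Sm. fixc M t) \<le> Rr * (\<Sum>t\<in>Sm. fixc m t)"
  proof -
    have "(\<Sum>t\<in>Sm. fixc M t) \<le> \<theta> * (\<Sum>t\<in>Sm. fixc m t)" unfolding Sm_def by (rule fix_bound[OF feas])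
    also have "\<dots> \<le> Rr * (\<Sum>t\<in>Sm. fixc m t)"
      by (rule mult_right_mono[OF Rr_ge(2)]) (simp add: sum_nonneg fixc_nonneg)
    finally show ?thesis .
  qed
  have v1: "varc M t \<le> Rr * varc m t" if "t \<in> Sm" for t
  proof -
    have t: "t \<in> {1..T}" using that unfolding Sm_def by auto
    define s where "s = real (\<Sum>i=1..n. S t i)"
    have vM: "varc M t \<le> b * s" using varM[OF t] unfolding s_def .
    have vm: "a * s \<le> varc m t" using varm[OF feas t] unfolding s_def .
    have s0: "0 \<le> s" unfolding s_def by (rule of_nat_0_le_iff)
    have "b * s = (b / a) * (a * s)" using a0 by simp
    also have "\<dots> \<le> (b / a) * varc m t" using vm a0 ab by (intro mult_left_mono) auto
    also have "\<dots> \<le> Rr * varc m t"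
      using Rr_ge(1) vm a0 s0 by (intro mult_right_mono) (auto intro: order_trans[of 0 "a * s"])
    finally show ?thesis using vM by linarith
  qed
  have "(\<Sum>t\<in>Sm. fixc M t + varc M t) = (\<Sum>t\<in>Sm. fixc M t) + (\<Sum>t\<in>Sm. varc M t)"
    by (rule sum.distrib)
  also have "\<dots> \<le> Rr * (\<Sum>t\<in>Sm. fixc m t) + (\<Sum>t\<in>Sm. Rr * varc m t)"
    using f1 sum_mono[of Sm "\<lambda>t. varc M t" "\<lambda>t. Rr * varc m t"] v1 by auto
  also have "\<dots> = Rr * (\<Sum>t\<in>Sm. fixc m t + varc m t)"
    by (simp add: sum.distrib sum_distrib_left distrib_left)
  finally show ?thesis unfolding Sm_def .
qed

lemma alg_le:
  assumes feas: "feasible_plan K I m"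
  shows "ALG_os K f \<theta> I \<le> Rr * plan_cost K f I m"
proof -
  define Sm where "Sm = {t\<in>{1..T}. small t}"
  define Lg where "Lg = {t\<in>{1..T}. \<not> small t}"
  have U: "{1..T} = Sm \<union> Lg" "Sm \<inter> Lg = {}" "finite Sm" "finite Lg" unfolding Sm_def Lg_def by auto
  have spl: "(\<Sum>t=1..T. h t) = (\<Sum>t\<in>Sm. h t) + (\<Sum>t\<in>Lg. h t)" for h :: "nat \<Rightarrow> real"
    by (subst U(1), rule sum.union_disjoint) (use U in auto)
  have L: "(\<Sum>t\<in>Lg. fixc M t + varc M t) \<le> (\<Sum>t\<in>Lg. Rr * (fixc m t + varc m t))"
    by (rule sum_mono, rule large_period[OF feas]) (auto simp: Lg_def)
  have Sm: "(\<Sum>t\<in>Sm. fixc M t + varc M t) \<le> Rr * (\<Sum>t\<in>Sm. fixc m t + varc m t)"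
    unfolding Sm_def by (rule small_sum[OF feas])
  have "ALG_os K f \<theta> I = (\<Sum>t=1..T. fixc M t + varc M t)"
    unfolding ALG_os_def plan_cost_split ..
  also have "\<dots> \<le> Rr * (\<Sum>t\<in>Sm. fixc m t + varc m t) + Rr * (\<Sum>t\<in>Lg. fixc m t + varc m t)"
    using L Sm spl[of "\<lambda>t. fixc M t + varc M t"] by (simp add: sum_distrib_left)
  also have "\<dots> = Rr * plan_cost K f I m"
    unfolding plan_cost_split spl[of "\<lambda>t. fixc m t + varc m t"] by (simp add: distrib_left)
  finally show ?thesis .
qed

lemma ratio_le:
  assumes opt: "OPT K f I > 0"
  shows "ALG_os K f \<theta> I / OPT K f I \<le> Rr"
proof -
  define Cs where "Cs = {plan_cost K f I m | m. feasible_plan K I m}"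
  define m0 :: "nat \<Rightarrow> nat \<Rightarrow> nat \<Rightarrow> nat" where "m0 = (\<lambda>k t i. if k = 0 then S t i else 0)"
  have "feasible_plan K I m0"
  proof -
    have "(\<Sum>k=0..K. m0 k t i) = S t i" for t i unfolding m0_def by (simp add: sum.delta)
    moreover have "int (m0 k t i) \<le> int (inv0 I k i) - (\<Sum>\<tau>=1..<t. int (m0 k \<tau> i))" if "k \<in> {1..K}" for k t i
      using that unfolding m0_def by simp
    ultimately show ?thesis unfolding feasible_plan_def by blast
  qed
  hence ne: "Cs \<noteq> {}" unfolding Cs_def by blast
  have "0 < b / a" using a0 ab by simp
  hence Rpos: "0 < Rr" using Rr_ge(1) by linarith
  have "ALG_os K f \<theta> I / Rr \<le> Inf Cs"
  proof (rule cInf_greatest[OF ne])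
    fix c assume "c \<in> Cs"
    then obtain m where "feasible_plan K I m" "c = plan_cost K f I m" unfolding Cs_def by blast
    then have "ALG_os K f \<theta> I \<le> c * Rr" using alg_le[of m] by (simp add: algebra_simps)
    then show "ALG_os K f \<theta> I / Rr \<le> c" using Rpos by (simp only: pos_divide_le_eq)
  qed
  hence "ALG_os K f \<theta> I / Rr \<le> OPT K f I" unfolding OPT_def Cs_def .
  hence "ALG_os K f \<theta> I \<le> OPT K f I * Rr" using Rpos by (simp only: pos_divide_le_eq)
  hence "ALG_os K f \<theta> I \<le> Rr * OPT K f I" by (simp only: mult.commute)
  thus ?thesis using opt by (simp only: pos_divide_le_eq)
qed

end



lemma theta_s:
  fixes a b g f0 :: real
  assumes a0: "0 < a" and b0: "0 < b" and g0: "0 \<le> g" and f0: "0 \<le> f0"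
  defines "\<theta> \<equiv> sqrt (f0 / a + (g - b)\<^sup>2 / (4 * a\<^sup>2)) - (g - b) / (2 * a)"
  shows "0 \<le> \<theta>" "0 < g + a * \<theta>" "(f0 + b * \<theta>) / (g + a * \<theta>) = \<theta>"
proof -
  define u where "u = (g - b) / (2 * a)"
  define D where "D = f0 / a + (g - b)\<^sup>2 / (4 * a\<^sup>2)"
  have uu: "u\<^sup>2 = (g - b)\<^sup>2 / (4 * a\<^sup>2)" unfolding u_def by (simp add: power_divide power_mult_distrib)
  have D: "D = f0 / a + u\<^sup>2" unfolding D_def uu ..
  have D0: "0 \<le> D" using D f0 a0 by simp
  have th: "\<theta> = sqrt D - u" unfolding \<theta>_def D_def u_def ..
  have "\<bar>u\<bar> = sqrt (u\<^sup>2)" by simp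
  also have "\<dots> \<le> sqrt D" using D f0 a0 by (intro real_sqrt_le_mono) simp
  finally have su: "\<bar>u\<bar> \<le> sqrt D" .
  show "0 \<le> \<theta>" unfolding th using su by linarith
  have sq: "(sqrt D)\<^sup>2 = D" using D0 by simp
  have e: "(\<theta> + u)\<^sup>2 = f0 / a + u\<^sup>2" using sq D th by simp
  hence "\<theta>\<^sup>2 + 2 * u * \<theta> = f0 / a" by (simp add: power2_eq_square algebra_simps)
  hence "a * (\<theta>\<^sup>2 + 2 * u * \<theta>) = f0" using a0 by (simp add: field_simps)
  moreover have "a * (2 * u) = g - b" unfolding u_def using a0 by simp
  ultimately have key: "a * \<theta>\<^sup>2 + (g - b) * \<theta> = f0"
    by (metis (no_types, lifting) distrib_left mult.assoc mult.commute)
  have "g + a * \<theta> = (g + b) / 2 + a * sqrt D" unfolding th u_def using a0 by (simp add: field_simps)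
  moreover have "0 \<le> a * sqrt D" using a0 D0 by simp
  moreover have "0 < (g + b) / 2" using g0 b0 by simp
  hence "0 < (g + b) / 2 + a * sqrt D" using \<open>0 \<le> a * sqrt D\<close> by (rule add_pos_nonneg)
  ultimately show pos: "0 < g + a * \<theta>" by simp
  have "f0 + b * \<theta> = \<theta> * (g + a * \<theta>)" using key by (simp add: power2_eq_square algebra_simps)
  thus "(f0 + b * \<theta>) / (g + a * \<theta>) = \<theta>" using pos by simp
qed

theorem theorem1:
  fixes K :: nat and f :: "nat \<Rightarrow> real" and a b :: real
  assumes "K \<ge> 1" and "\<forall>k\<le>K. f k \<ge> 0" and "0 < a" and "a < b"
  shows "(\<forall>\<theta>::real. \<theta> \<ge> 0 \<longrightarrow> Min (f ` {1..K}) + a * \<theta> > 0 \<longrightarrow>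
            comp_ratio_os K f a b \<theta>
              \<le> ereal (max \<theta> (max ((f 0 + b * \<theta>) / (Min (f ` {1..K}) + a * \<theta>)) (b / a))))
       \<and> (let \<theta>s = sqrt (f 0 / a + (Min (f ` {1..K}) - b)\<^sup>2 / (4 * a\<^sup>2))
                   - (Min (f ` {1..K}) - b) / (2 * a)
          in comp_ratio_os K f a b \<theta>s \<le> ereal (max \<theta>s (b / a)))"
proof -
  have P1: "comp_ratio_os K f a b \<theta>
              \<le> ereal (max \<theta> (max ((f 0 + b * \<theta>) / (Min (f ` {1..K}) + a * \<theta>)) (b / a)))"
    if th0: "\<theta> \<ge> 0" and D0: "Min (f ` {1..K}) + a * \<theta> > 0" for \<theta>
    unfolding comp_ratio_os_def
  proof (rule SUP_least)
    fix I assume "I \<in> {I. valid_instance K a b I \<and> OPT K f I > 0}"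
    hence v: "valid_instance K a b I" and o: "OPT K f I > 0" by auto
    interpret inst2 K f \<theta> I a b
      by unfold_locales (use assms th0 D0 v in auto)
    show "ereal (ALG_os K f \<theta> I / OPT K f I)
        \<le> ereal (max \<theta> (max ((f 0 + b * \<theta>) / (Min (f ` {1..K}) + a * \<theta>)) (b / a)))"
      using ratio_le[OF o] unfolding Rr_def by (simp only: ereal_less_eq(3))
  qed
  have g0: "0 \<le> Min (f ` {1..K})" using assms(1,2) by (subst Min_ge_iff) auto
  have b0: "0 < b" using assms by simp
  have f00: "0 \<le> f 0" using assms by simp
  note ts = theta_s[OF assms(3) b0 g0 f00]
  show ?thesis
  proof (intro conjI allI impI)
    fix \<theta> :: real assume "\<theta> \<ge> 0" "Min (f ` {1..K}) + a * \<theta> > 0"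
    then show "comp_ratio_os K f a b \<theta>
              \<le> ereal (max \<theta> (max ((f 0 + b * \<theta>) / (Min (f ` {1..K}) + a * \<theta>)) (b / a)))"
      by (rule P1)
  next
    show "let \<theta>s = sqrt (f 0 / a + (Min (f ` {1..K}) - b)\<^sup>2 / (4 * a\<^sup>2))
                   - (Min (f ` {1..K}) - b) / (2 * a)
          in comp_ratio_os K f a b \<theta>s \<le> ereal (max \<theta>s (b / a))"
      unfolding Let_def using P1[OF ts(1) ts(2)] unfolding ts(3) by simp
  qed
qed


end
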